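(* For every first-order formula $\varphi$ of the language of group theory and every evaluation $e:\{x_1,x_2,\dots\}\to\mathbb N$ of its variables, the set $\mathcal S_{\varphi[e]}=\{G\in\mathcal G:\ \overline G\models\varphi[e]\}$ is Borel in $\mathcal G$. Consequently, if $\varphi$ is a sentence, then $\mathcal S_\varphi$ is either meager or comeager in $\mathcal G$.
   Context: Let $\mathbb N=\{1,2,3,\dots\}$. Equip $\mathbb N^{\mathbb N\times\mathbb N}$ with the product topology of the discrete topology on $\mathbb N$. Let $\mathcal G$ be the subspace consisting of those $A\in\mathbb N^{\mathbb N\times\mathbb N}$ that are the multiplication table of a group on the underlying set $\mathbb N$ whose identity element is $1$. For $G\in\mathcal G$, $\overline G$ denotes the group on $\mathbb N$ with multiplication table $G$. The language of group theory has a binary function symbol (multiplication) and a constant symbol $1$, with variables $x_1,x_2,\dots$; $\overline G\models\varphi[e]$ means $\varphi$ is true in $\overline G$ under the variable assignment $e$. *)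

theory Defs
  imports "HOL-Analysis.Analysis"
begin

text \<open>Convention: the underlying set N = {1,2,3,...} is represented by the type nat
  via the bijection k \<mapsto> k+1; thus the HOL value 0 represents the element 1
  (the required identity) and the HOL value k represents k+1.
  A multiplication table is a function A :: nat \<times> nat \<Rightarrow> nat, A(x,y) = x*y.\<close>

definition is_group_table :: "(nat \<times> nat \<Rightarrow> nat) \<Rightarrow> bool" where
  "is_group_table A \<longleftrightarrow>
     (\<forall>x y z. A (A (x, y), z) = A (x, A (y, z))) \<and>
     (\<forall>x. A (0, x) = x \<and> A (x, 0) = x) \<and>
     (\<forall>x. \<exists>y. A (x, y) = 0 \<and> A (y, x) = 0)"

definition table_space :: "(nat \<times> nat \<Rightarrow> nat) topology" where
  "table_space = product_topology (\<lambda>_. discrete_topology (UNIV :: nat set)) UNIV"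

definition GroupTables :: "(nat \<times> nat \<Rightarrow> nat) set" where
  "GroupTables = {A. is_group_table A}"

definition group_space :: "(nat \<times> nat \<Rightarrow> nat) topology" where
  "group_space = subtopology table_space GroupTables"

definition borel_sets_of :: "'a topology \<Rightarrow> 'a set set" where
  "borel_sets_of X = sigma_sets (topspace X) {U. openin X U}"

definition nowhere_dense_in :: "'a topology \<Rightarrow> 'a set \<Rightarrow> bool" where
  "nowhere_dense_in X S \<longleftrightarrow> S \<subseteq> topspace X \<and> X interior_of (X closure_of S) = {}"

definition meager_in :: "'a topology \<Rightarrow> 'a set \<Rightarrow> bool" where
  "meager_in X S \<longleftrightarrow> S \<subseteq> topspace X \<and>
     (\<exists>F :: nat \<Rightarrow> 'a set. (\<forall>n. nowhere_dense_in X (F n)) \<and> S \<subseteq> (\<Union>n. F n))"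

definition comeager_in :: "'a topology \<Rightarrow> 'a set \<Rightarrow> bool" where
  "comeager_in X S \<longleftrightarrow> S \<subseteq> topspace X \<and> meager_in X (topspace X - S)"

datatype gterm = GVar nat | GOne | GMul gterm gterm

datatype gform =
    GEq gterm gterm
  | GFalse
  | GNot gform
  | GAnd gform gform
  | GOr gform gform
  | GImp gform gform
  | GEx nat gform
  | GAll nat gform

primrec term_eval :: "(nat \<times> nat \<Rightarrow> nat) \<Rightarrow> (nat \<Rightarrow> nat) \<Rightarrow> gterm \<Rightarrow> nat" where
  "term_eval A e (GVar i) = e i"
| "term_eval A e GOne = 0"
| "term_eval A e (GMul s t) = A (term_eval A e s, term_eval A e t)"

primrec models :: "(nat \<times> nat \<Rightarrow> nat) \<Rightarrow> gform \<Rightarrow> (nat \<Rightarrow> nat) \<Rightarrow> bool" where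
  "models A (GEq s t) e = (term_eval A e s = term_eval A e t)"
| "models A GFalse e = False"
| "models A (GNot p) e = (\<not> models A p e)"
| "models A (GAnd p q) e = (models A p e \<and> models A q e)"
| "models A (GOr p q) e = (models A p e \<or> models A q e)"
| "models A (GImp p q) e = (models A p e \<longrightarrow> models A q e)"
| "models A (GEx i p) e = (\<exists>a. models A p (e(i := a)))"
| "models A (GAll i p) e = (\<forall>a. models A p (e(i := a)))"

primrec term_vars :: "gterm \<Rightarrow> nat set" where
  "term_vars (GVar i) = {i}"
| "term_vars GOne = {}"
| "term_vars (GMul s t) = term_vars s \<union> term_vars t"

primrec free_vars :: "gform \<Rightarrow> nat set" where
  "free_vars (GEq s t) = term_vars s \<union> term_vars t"
| "free_vars GFalse = {}"
| "free_vars (GNot p) = free_vars p"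
| "free_vars (GAnd p q) = free_vars p \<union> free_vars q"
| "free_vars (GOr p q) = free_vars p \<union> free_vars q"
| "free_vars (GImp p q) = free_vars p \<union> free_vars q"
| "free_vars (GEx i p) = free_vars p - {i}"
| "free_vars (GAll i p) = free_vars p - {i}"

definition sentence :: "gform \<Rightarrow> bool" where
  "sentence p \<longleftrightarrow> free_vars p = {}"

definition Sat_set :: "gform \<Rightarrow> (nat \<Rightarrow> nat) \<Rightarrow> (nat \<times> nat \<Rightarrow> nat) set" where
  "Sat_set p e = {A \<in> GroupTables. models A p e}"

end

theory Submission
  imports Defs
begin

definition cyl :: "(nat \<times> nat) set \<Rightarrow> (nat \<times> nat \<Rightarrow> nat) \<Rightarrow> (nat \<times> nat \<Rightarrow> nat) set" where
  "cyl F A = {B. \<forall>p\<in>F. B p = A p}"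

definition loccon :: "((nat \<times> nat \<Rightarrow> nat) \<Rightarrow> 'b) \<Rightarrow> bool" where
  "loccon f \<longleftrightarrow> (\<forall>A. \<exists>F. finite F \<and> (\<forall>B\<in>cyl F A. f B = f A))"

lemma topspace_table [simp]: "topspace table_space = UNIV"
  by (simp add: table_space_def)

lemma topspace_group [simp]: "topspace group_space = GroupTables"
  by (simp add: group_space_def)

lemma cyl_open: assumes "finite F" shows "openin table_space (cyl F A)"
proof -
  have "cyl F A = PiE UNIV (\<lambda>p. if p \<in> F then {A p} else UNIV)"
    by (auto simp: cyl_def PiE_def extensional_def Pi_def)
  moreover have "openin table_space (PiE UNIV (\<lambda>p. if p \<in> F then {A p} else UNIV))"
    unfolding table_space_def
  proof (rule product_topology_basis)
    show "finite {i. (if i \<in> F then {A i} else UNIV) \<noteq> topspace (discrete_topology (UNIV::nat set))}"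
      by (rule finite_subset[OF _ assms]) auto
  qed simp
  ultimately show ?thesis by simp
qed

lemma cyl_self [simp]: "A \<in> cyl F A" by (simp add: cyl_def)

lemma loccon_open: assumes "loccon f" shows "openin table_space {A. P (f A)}"
proof (subst openin_subopen, intro ballI)
  fix A assume "A \<in> {A. P (f A)}"
  obtain F where F: "finite F" "\<forall>B\<in>cyl F A. f B = f A" using assms loccon_def by blast
  show "\<exists>T. openin table_space T \<and> A \<in> T \<and> T \<subseteq> {A. P (f A)}"
  proof (intro exI conjI)
    show "openin table_space (cyl F A)" by (rule cyl_open[OF F(1)])
    show "A \<in> cyl F A" by simp
    show "cyl F A \<subseteq> {A. P (f A)}"
    proof
      fix B assume "B \<in> cyl F A"
      then have "f B = f A" using F(2) by blast
      then show "B \<in> {A. P (f A)}" using \<open>A \<in> {A. P (f A)}\<close> by simp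
    qed
  qed
qed

lemma loccon_pair: assumes f: "loccon f" and g: "loccon g" shows "loccon (\<lambda>A. (f A, g A))"
  unfolding loccon_def
proof
  fix A
  obtain F1 where F1: "finite F1" "\<forall>B\<in>cyl F1 A. f B = f A" using f unfolding loccon_def by metis
  obtain F2 where F2: "finite F2" "\<forall>B\<in>cyl F2 A. g B = g A" using g unfolding loccon_def by metis
  have "\<forall>B\<in>cyl (F1 \<union> F2) A. (f B, g B) = (f A, g A)"
  proof
    fix B assume "B \<in> cyl (F1 \<union> F2) A"
    then have "B \<in> cyl F1 A" "B \<in> cyl F2 A" unfolding cyl_def by auto
    then have "f B = f A" "g B = g A" using F1(2) F2(2) by blast+
    then show "(f B, g B) = (f A, g A)" by (rule arg_cong2)
  qed
  then show "\<exists>F. finite F \<and> (\<forall>B\<in>cyl F A. (f B, g B) = (f A, g A))"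
    using F1(1) F2(1) by blast
qed

lemma loccon_const: "loccon (\<lambda>A. c)"
  unfolding loccon_def by (intro allI exI[of _ "{}"]) simp

lemma loccon_term: "loccon (\<lambda>A. term_eval A e t)"
proof (induction t)
  case (GMul s t)
  show ?case unfolding loccon_def
  proof
    fix A
    obtain F1 where F1: "finite F1" "\<forall>B\<in>cyl F1 A. term_eval B e s = term_eval A e s"
      using GMul(1) unfolding loccon_def by metis
    obtain F2 where F2: "finite F2" "\<forall>B\<in>cyl F2 A. term_eval B e t = term_eval A e t"
      using GMul(2) unfolding loccon_def by metis
    have "\<forall>B\<in>cyl (F1 \<union> F2 \<union> {(term_eval A e s, term_eval A e t)}) A.
           term_eval B e (GMul s t) = term_eval A e (GMul s t)"
    proof
      fix B assume B: "B \<in> cyl (F1 \<union> F2 \<union> {(term_eval A e s, term_eval A e t)}) A"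
      then have "B \<in> cyl F1 A" "B \<in> cyl F2 A" unfolding cyl_def by auto
      then have 1: "term_eval B e s = term_eval A e s" "term_eval B e t = term_eval A e t"
        using F1(2) F2(2) by blast+
      have 2: "B (term_eval A e s, term_eval A e t) = A (term_eval A e s, term_eval A e t)"
        using B unfolding cyl_def by blast
      show "term_eval B e (GMul s t) = term_eval A e (GMul s t)"
        by (simp only: term_eval.simps 1 2)
    qed
    moreover have "finite (F1 \<union> F2 \<union> {(term_eval A e s, term_eval A e t)})"
      using F1(1) F2(1) by simp
    ultimately show "\<exists>F. finite F \<and> (\<forall>B\<in>cyl F A. term_eval B e (GMul s t) = term_eval A e (GMul s t))"
      by (intro exI[of _ "F1 \<union> F2 \<union> {(term_eval A e s, term_eval A e t)}"] conjI)
  qed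
next
  case (GVar i)
  have "loccon (\<lambda>A::nat\<times>nat\<Rightarrow>nat. e i)" by (rule loccon_const)
  then show ?case by simp
next
  case GOne
  have "loccon (\<lambda>A::nat\<times>nat\<Rightarrow>nat. 0::nat)" by (rule loccon_const)
  then show ?case by simp
qed

lemma eq_open: "openin table_space {A. term_eval A e s = term_eval A e t}"
proof -
  have "loccon (\<lambda>A. (term_eval A e s, term_eval A e t))"
    by (rule loccon_pair[OF loccon_term[of e s] loccon_term[of e t]])
  then have "openin table_space {A. (\<lambda>p. fst p = snd p) (term_eval A e s, term_eval A e t)}"
    using loccon_open[of "\<lambda>A. (term_eval A e s, term_eval A e t)" "\<lambda>p. fst p = snd p"] by blast
  then show ?thesis by simp
qed

lemma eq_open_neg: "openin table_space {A. term_eval A e s \<noteq> term_eval A e t}"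
proof -
  have "loccon (\<lambda>A. (term_eval A e s, term_eval A e t))"
    by (rule loccon_pair[OF loccon_term[of e s] loccon_term[of e t]])
  then have "openin table_space {A. (\<lambda>p. fst p \<noteq> snd p) (term_eval A e s, term_eval A e t)}"
    using loccon_open[of "\<lambda>A. (term_eval A e s, term_eval A e t)" "\<lambda>p. fst p \<noteq> snd p"] by blast
  then show ?thesis by simp
qed

lemma open_group: "openin table_space U \<Longrightarrow> openin group_space (U \<inter> GroupTables)"
  unfolding group_space_def openin_subtopology by blast

lemma borel_Int: assumes "a \<in> borel_sets_of X" "b \<in> borel_sets_of X"
  shows "a \<inter> b \<in> borel_sets_of X"
proof -
  have "(\<Inter>i::nat. if i = 0 then a else b) \<in> borel_sets_of X"
    unfolding borel_sets_of_def
    by (rule sigma_sets_Inter) (use assms openin_subset in \<open>auto simp: borel_sets_of_def\<close>)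
  moreover have "(\<Inter>i::nat. if i = 0 then a else b) = a \<inter> b"
    by auto
  ultimately show ?thesis by simp
qed

lemma borel_compl: "a \<in> borel_sets_of X \<Longrightarrow> topspace X - a \<in> borel_sets_of X"
  unfolding borel_sets_of_def by (rule sigma_sets.Compl)

lemma borel_Un: "a \<in> borel_sets_of X \<Longrightarrow> b \<in> borel_sets_of X \<Longrightarrow> a \<union> b \<in> borel_sets_of X"
  unfolding borel_sets_of_def by (rule sigma_sets_Un)

lemma borel_UN: "(\<And>i::nat. a i \<in> borel_sets_of X) \<Longrightarrow> (\<Union>i. a i) \<in> borel_sets_of X"
  unfolding borel_sets_of_def by (rule sigma_sets.Union)

lemma borel_open: "openin X U \<Longrightarrow> U \<in> borel_sets_of X"
  unfolding borel_sets_of_def by (rule sigma_sets.Basic) simp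

lemma Sat_borel: "Sat_set \<phi> e \<in> borel_sets_of group_space"
proof (induction \<phi> arbitrary: e)
  case (GEq s t)
  have "Sat_set (GEq s t) e = {A. term_eval A e s = term_eval A e t} \<inter> GroupTables"
    by (auto simp: Sat_set_def)
  then show ?case using borel_open[OF open_group[OF eq_open]] by simp
next
  case GFalse
  then show ?case using borel_open[of group_space "{}"] by (simp add: Sat_set_def)
next
  case (GNot p)
  have "Sat_set (GNot p) e = topspace group_space - Sat_set p e" by (auto simp: Sat_set_def)
  then show ?case using borel_compl GNot by metis
next
  case (GAnd p q)
  have "Sat_set (GAnd p q) e = Sat_set p e \<inter> Sat_set q e" by (auto simp: Sat_set_def)
  then show ?case using borel_Int GAnd by metis
next
  case (GOr p q)
  have "Sat_set (GOr p q) e = Sat_set p e \<union> Sat_set q e" by (auto simp: Sat_set_def)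
  then show ?case using borel_Un GOr by metis
next
  case (GImp p q)
  have "Sat_set (GImp p q) e = (topspace group_space - Sat_set p e) \<union> Sat_set q e" by (auto simp: Sat_set_def)
  then show ?case using borel_Un borel_compl GImp by metis
next
  case (GEx i p)
  have "Sat_set (GEx i p) e = (\<Union>a. Sat_set p (e(i:=a)))" by (auto simp: Sat_set_def)
  then show ?case using borel_UN GEx by metis
next
  case (GAll i p)
  have "Sat_set (GAll i p) e = topspace group_space - (\<Union>a. topspace group_space - Sat_set p (e(i:=a)))"
    by (auto simp: Sat_set_def)
  then show ?case using borel_UN borel_compl GAll by metis
qed


lemma nowhere_dense_empty: "nowhere_dense_in X {}"
  by (simp add: nowhere_dense_in_def)

lemma meager_empty: "meager_in X {}"
  unfolding meager_in_def using nowhere_dense_empty by (intro conjI exI[of _ "\<lambda>_. {}"]) auto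

lemma meager_subset: "meager_in X T \<Longrightarrow> S \<subseteq> T \<Longrightarrow> meager_in X S"
  unfolding meager_in_def by blast

lemma meager_UN:
  fixes S :: "nat \<Rightarrow> 'a set"
  assumes "\<And>i::nat. meager_in X (S i)"
  shows "meager_in X (\<Union>i. S i)"
proof -
  have "\<forall>i. \<exists>F::nat \<Rightarrow> 'a set. (\<forall>n. nowhere_dense_in X (F n)) \<and> S i \<subseteq> (\<Union>n. F n)"
    using assms unfolding meager_in_def by blast
  from choice[OF this] obtain F :: "nat \<Rightarrow> nat \<Rightarrow> 'a set" where F0: "\<forall>i. (\<forall>n. nowhere_dense_in X (F i n)) \<and> S i \<subseteq> (\<Union>n. F i n)"
    by blast
  then have F: "\<And>i. (\<forall>n. nowhere_dense_in X (F i n)) \<and> S i \<subseteq> (\<Union>n. F i n)" by blast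
  define G where "G m = F (fst (prod_decode m)) (snd (prod_decode m))" for m
  have "\<forall>m. nowhere_dense_in X (G m)" unfolding G_def using F by simp
  moreover have "(\<Union>i. S i) \<subseteq> (\<Union>m. G m)"
  proof
    fix x assume "x \<in> (\<Union>i. S i)"
    then obtain i where "x \<in> S i" by blast
    then obtain n where "x \<in> F i n" using F by blast
    then have "x \<in> G (prod_encode (i, n))" unfolding G_def by simp
    then show "x \<in> (\<Union>m. G m)" by blast
  qed
  moreover have "(\<Union>i. S i) \<subseteq> topspace X" using assms unfolding meager_in_def by blast
  ultimately show ?thesis unfolding meager_in_def by (intro conjI exI[of _ G])
qed

lemma meager_Un: "meager_in X S \<Longrightarrow> meager_in X T \<Longrightarrow> meager_in X (S \<union> T)"
proof -
  assume a: "meager_in X S" "meager_in X T"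
  have "meager_in X (\<Union>i::nat. if i = 0 then S else T)"
    by (rule meager_UN) (use a in simp)
  moreover have "(\<Union>i::nat. if i = 0 then S else T) = S \<union> T" by auto
  ultimately show ?thesis by simp
qed

lemma nowhere_dense_boundary:
  assumes U: "openin X U"
  shows "nowhere_dense_in X (X closure_of U - U)"
proof -
  let ?N = "X closure_of U - U"
  have cl: "closedin X ?N" using U by (intro closedin_diff) auto
  have "X interior_of ?N = {}"
    unfolding interior_of_eq_empty
  proof (intro allI impI)
    fix T assume T: "openin X T \<and> T \<subseteq> ?N"
    then have "T \<inter> U = {}" by auto
    then have "T \<inter> X closure_of U = {}" using openin_Int_closure_of_eq_empty[of X T U] T by simp
    then show "T = {}" using T by blast
  qed
  moreover have "?N \<subseteq> topspace X" using closure_of_subset_topspace[of X U] by blast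
  ultimately show ?thesis unfolding nowhere_dense_in_def using closure_of_closedin[OF cl] by simp
qed

lemma nowhere_dense_homeo:
  assumes h: "homeomorphic_map X X f" and N: "nowhere_dense_in X N"
  shows "nowhere_dense_in X (f ` N)"
proof -
  have Nsub: "N \<subseteq> topspace X" and Nint: "X interior_of (X closure_of N) = {}"
    using N unfolding nowhere_dense_in_def by auto
  have img: "f ` N \<subseteq> topspace X"
    using image_mono[OF Nsub, of f] homeomorphic_imp_surjective_map[OF h] by simp
  have c: "X closure_of (f ` N) = f ` (X closure_of N)"
    by (rule homeomorphic_map_closure_of[OF h Nsub])
  have i: "X interior_of (f ` (X closure_of N)) = f ` (X interior_of (X closure_of N))"
    by (rule homeomorphic_map_interior_of[OF h closure_of_subset_topspace])
  have "X interior_of (X closure_of (f ` N)) = {}" unfolding c i Nint by simp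
  then show ?thesis using img unfolding nowhere_dense_in_def by simp
qed

lemma meager_homeo:
  fixes S :: "'a set"
  assumes h: "homeomorphic_map X X f" and M: "meager_in X S"
  shows "meager_in X (f ` S)"
proof -
  obtain F :: "nat \<Rightarrow> 'a set" where F: "\<forall>n. nowhere_dense_in X (F n)" "S \<subseteq> (\<Union>n. F n)" "S \<subseteq> topspace X"
    using M unfolding meager_in_def by blast
  have "\<forall>n. nowhere_dense_in X (f ` F n)" using nowhere_dense_homeo[OF h] F(1) by blast
  moreover have "f ` S \<subseteq> (\<Union>n. f ` F n)" using F(2) by blast
  moreover have "f ` S \<subseteq> topspace X"
    using image_mono[OF F(3), of f] homeomorphic_imp_surjective_map[OF h] by simp
  ultimately show ?thesis unfolding meager_in_def by (intro conjI exI[of _ "\<lambda>n. f ` F n"])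
qed

lemma bp_borel:
  fixes S :: "'a set"
  assumes "S \<in> borel_sets_of X"
  shows "\<exists>U. openin X U \<and> meager_in X (S - U) \<and> meager_in X (U - S)"
  using assms unfolding borel_sets_of_def
proof (induction rule: sigma_sets.induct)
  case (Basic a)
  then show ?case using meager_empty by (intro exI[of _ a]) auto
next
  case Empty
  then show ?case using meager_empty by (intro exI[of _ "{}"]) auto
next
  case (Compl a)
  then obtain U where U: "openin X U" "meager_in X (a - U)" "meager_in X (U - a)" by blast
  define U' where "U' = topspace X - X closure_of U"
  have oU': "openin X U'" unfolding U'_def by (rule openin_diff) auto
  have asub: "a \<subseteq> topspace X"
    using Compl(1) sigma_sets_into_sp[of "{U. openin X U}" "topspace X" a] openin_subset by blast
  have m1: "meager_in X (X closure_of U - U)"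
    unfolding meager_in_def
    using nowhere_dense_boundary[OF U(1)] closure_of_subset_topspace[of X U]
    by (intro conjI exI[of _ "\<lambda>_. X closure_of U - U"]) auto
  have "(topspace X - a) - U' \<subseteq> (U - a) \<union> (X closure_of U - U)"
    unfolding U'_def by blast
  then have "meager_in X ((topspace X - a) - U')"
    using meager_Un[OF U(3) m1] meager_subset by blast
  moreover have "U' - (topspace X - a) \<subseteq> a - U"
  proof
    fix x assume x: "x \<in> U' - (topspace X - a)"
    then have "x \<notin> X closure_of U" "x \<in> topspace X" unfolding U'_def by auto
    then have "x \<notin> U" using closure_of_subset[OF openin_subset[OF U(1)]] by blast
    then show "x \<in> a - U" using x unfolding U'_def by blast
  qed
  then have "meager_in X (U' - (topspace X - a))"
    using U(2) meager_subset by blast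
  ultimately show ?case using oU' by blast
next
  case (Union a)
  then have "\<forall>i::nat. \<exists>U. openin X U \<and> meager_in X (a i - U) \<and> meager_in X (U - a i)" by blast
  from choice[OF this] obtain U :: "nat \<Rightarrow> 'a set"
    where U0: "\<forall>i. openin X (U i) \<and> meager_in X (a i - U i) \<and> meager_in X (U i - a i)"
    by blast
  have o: "\<And>i. openin X (U i)" and m1: "\<And>i. meager_in X (a i - U i)" and m2: "\<And>i. meager_in X (U i - a i)"
    using U0 by auto
  have "openin X (\<Union>i. U i)" by (intro openin_Union) (auto simp: o)
  moreover have "meager_in X ((\<Union>i. a i) - (\<Union>i. U i))"
  proof (rule meager_subset)
    show "meager_in X (\<Union>i. a i - U i)" by (rule meager_UN) (rule m1)
    show "(\<Union>i. a i) - (\<Union>i. U i) \<subseteq> (\<Union>i. a i - U i)" by blast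
  qed
  moreover have "meager_in X ((\<Union>i. U i) - (\<Union>i. a i))"
  proof (rule meager_subset)
    show "meager_in X (\<Union>i. U i - a i)" by (rule meager_UN) (rule m2)
    show "(\<Union>i. U i) - (\<Union>i. a i) \<subseteq> (\<Union>i. U i - a i)" by blast
  qed
  ultimately show ?case by blast
qed


lemma cm_table: "completely_metrizable_space table_space"
proof -
  have c: "countable (UNIV :: (nat \<times> nat) set)" by simp
  have "countable {i \<in> (UNIV :: (nat \<times> nat) set). \<not> (\<exists>a. topspace (discrete_topology (UNIV::nat set)) \<subseteq> {a})}"
    by (rule countable_subset[OF _ c]) simp
  then show ?thesis
    unfolding table_space_def completely_metrizable_space_product_topology
    by (simp add: completely_metrizable_space_discrete_topology)
qed

lemma open_assoc: "openin table_space {A. A (A (x, y), z) = A (x, A (y, z))}"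
proof -
  define e where "e = (\<lambda>i::nat. if i = 0 then x else if i = 1 then y else z)"
  have eq: "{A. A (A (x, y), z) = A (x, A (y, z))} =
    {A. term_eval A e (GMul (GMul (GVar 0) (GVar 1)) (GVar 2)) = term_eval A e (GMul (GVar 0) (GMul (GVar 1) (GVar 2)))}"
    by (simp add: e_def)
  show ?thesis unfolding eq by (rule eq_open)
qed

lemma open_lid: "openin table_space {A. A (0, x) = x}"
proof -
  have eq: "{A. A (0, x) = x} = {A. term_eval A (\<lambda>_. x) (GMul GOne (GVar 0)) = term_eval A (\<lambda>_. x) (GVar 0)}"
    by simp
  show ?thesis unfolding eq by (rule eq_open)
qed

lemma open_rid: "openin table_space {A. A (x, 0) = x}"
proof -
  have eq: "{A. A (x, 0) = x} = {A. term_eval A (\<lambda>_. x) (GMul (GVar 0) GOne) = term_eval A (\<lambda>_. x) (GVar 0)}"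
    by simp
  show ?thesis unfolding eq by (rule eq_open)
qed

lemma open_prod0: "openin table_space {A. A (x, y) = 0}"
proof -
  define e where "e = (\<lambda>i::nat. if i = 0 then x else y)"
  have eq: "{A. A (x, y) = 0} = {A. term_eval A e (GMul (GVar 0) (GVar 1)) = term_eval A e GOne}"
    by (simp add: e_def)
  show ?thesis unfolding eq by (rule eq_open)
qed

lemma open_inv: "openin table_space {A. \<exists>y. A (x, y) = 0 \<and> A (y, x) = 0}"
proof -
  have eq: "{A. \<exists>y. A (x, y) = 0 \<and> A (y, x) = 0} = (\<Union>y. {A. A (x, y) = 0} \<inter> {A. A (y, x) = 0})"
    by blast
  have "\<And>y. openin table_space ({A. A (x, y) = 0} \<inter> {A. A (y, x) = 0})"
    using open_prod0 by (intro openin_Int)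
  then show ?thesis unfolding eq by (intro openin_Union) auto
qed

lemma GT_gdelta: "gdelta_in table_space GroupTables"
proof -
  define S :: "(nat \<times> nat \<Rightarrow> nat) set set" where "S = range (\<lambda>(x,y,z). {A. A (A (x, y), z) = A (x, A (y, z))})
     \<union> range (\<lambda>x. {A. A (0, x) = x} \<inter> {A. A (x, 0) = x})
     \<union> range (\<lambda>x. {A. \<exists>y. A (x, y) = 0 \<and> A (y, x) = 0})"
  have "countable S" unfolding S_def by (intro countable_Un countable_image) simp_all
  moreover have "S \<subseteq> Collect (openin table_space)"
    unfolding S_def using open_assoc open_lid open_rid open_inv by (auto intro: openin_Int)
  moreover have "\<Inter>S = GroupTables"
  proof
    show "\<Inter>S \<subseteq> GroupTables"
    proof
      fix A assume A: "A \<in> \<Inter>S"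
      have "\<forall>x y z. A (A (x, y), z) = A (x, A (y, z))"
      proof (intro allI)
        fix x y z
        have "{A. A (A (x, y), z) = A (x, A (y, z))} \<in> S" unfolding S_def by blast
        then show "A (A (x, y), z) = A (x, A (y, z))" using A by blast
      qed
      moreover have "\<forall>x. A (0, x) = x \<and> A (x, 0) = x"
      proof
        fix x
        have "{A. A (0, x) = x} \<inter> {A. A (x, 0) = x} \<in> S" unfolding S_def by blast
        then show "A (0, x) = x \<and> A (x, 0) = x" using A by blast
      qed
      moreover have "\<forall>x. \<exists>y. A (x, y) = 0 \<and> A (y, x) = 0"
      proof
        fix x
        have "{A. \<exists>y. A (x, y) = 0 \<and> A (y, x) = 0} \<in> S" unfolding S_def by blast
        then show "\<exists>y. A (x, y) = 0 \<and> A (y, x) = 0" using A by blast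
      qed
      ultimately show "A \<in> GroupTables" unfolding GroupTables_def is_group_table_def by blast
    qed
    show "GroupTables \<subseteq> \<Inter>S"
      unfolding S_def GroupTables_def is_group_table_def by auto
  qed
  ultimately have "(countable intersection_of openin table_space) GroupTables"
    unfolding intersection_of_def by blast
  then show ?thesis unfolding gdelta_in_alt by simp
qed

lemma cm_group: "completely_metrizable_space group_space"
  unfolding group_space_def by (rule completely_metrizable_space_gdelta_in[OF cm_table GT_gdelta])

lemma baire:
  assumes U: "openin group_space U" and M: "meager_in group_space U"
  shows "U = {}"
proof -
  obtain F :: "nat \<Rightarrow> (nat \<times> nat \<Rightarrow> nat) set" where F: "\<forall>n. nowhere_dense_in group_space (F n)" "U \<subseteq> (\<Union>n. F n)"
    using M unfolding meager_in_def by blast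
  define G where "G = range (\<lambda>n. group_space closure_of F n)"
  have "group_space interior_of \<Union>G = {}"
  proof (rule Baire_category_alt)
    show "completely_metrizable_space group_space \<or> locally_compact_space group_space \<and> regular_space group_space"
      using cm_group by blast
    show "countable G" unfolding G_def by simp
    fix T assume "T \<in> G"
    then obtain n where "T = group_space closure_of F n" unfolding G_def by blast
    then show "closedin group_space T \<and> group_space interior_of T = {}"
      using F(1) unfolding nowhere_dense_in_def by simp
  qed
  moreover have "U \<subseteq> \<Union>G"
  proof
    fix x assume "x \<in> U"
    then obtain n where x: "x \<in> F n" using F(2) by blast
    have "F n \<subseteq> topspace group_space" using F(1) unfolding nowhere_dense_in_def by blast
    then have "x \<in> group_space closure_of F n" using x closure_of_subset by blast
    then show "x \<in> \<Union>G" unfolding G_def by blast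
  qed
  then have "U \<subseteq> group_space interior_of \<Union>G" using U by (rule interior_of_maximal)
  ultimately show ?thesis by blast
qed


definition act :: "(nat \<Rightarrow> nat) \<Rightarrow> (nat \<Rightarrow> nat) \<Rightarrow> (nat \<times> nat \<Rightarrow> nat) \<Rightarrow> (nat \<times> nat \<Rightarrow> nat)" where
  "act p r A = (\<lambda>q. p (A (r (fst q), r (snd q))))"

definition perm :: "(nat \<Rightarrow> nat) \<Rightarrow> (nat \<Rightarrow> nat) \<Rightarrow> bool" where
  "perm p r \<longleftrightarrow> (\<forall>x. p (r x) = x) \<and> (\<forall>x. r (p x) = x) \<and> p 0 = 0"

lemma perm_sym: "perm p r \<Longrightarrow> perm r p"
  unfolding perm_def by metis

lemma perm_r0: "perm p r \<Longrightarrow> r 0 = 0"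
  unfolding perm_def by metis

lemma act_apply: "act p r A (x, y) = p (A (r x, r y))"
  by (simp add: act_def)

lemma act_GT:
  assumes P: "perm p r" and A: "A \<in> GroupTables"
  shows "act p r A \<in> GroupTables"
proof -
  have pr: "\<And>x. p (r x) = x" and rp: "\<And>x. r (p x) = x" and p0: "p 0 = 0" and r0: "r 0 = 0"
    using P perm_r0[OF P] unfolding perm_def by auto
  have as: "\<And>x y z. A (A (x, y), z) = A (x, A (y, z))" and lid: "\<And>x. A (0, x) = x"
    and rid: "\<And>x. A (x, 0) = x" and inv: "\<And>x. \<exists>y. A (x, y) = 0 \<and> A (y, x) = 0"
    using A unfolding GroupTables_def is_group_table_def by auto
  have "\<forall>x y z. act p r A (act p r A (x, y), z) = act p r A (x, act p r A (y, z))"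
    by (simp add: act_apply rp as)
  moreover have "\<forall>x. act p r A (0, x) = x \<and> act p r A (x, 0) = x"
    by (simp add: act_apply r0 lid rid pr)
  moreover have "\<forall>x. \<exists>y. act p r A (x, y) = 0 \<and> act p r A (y, x) = 0"
  proof
    fix x
    obtain y where y: "A (r x, y) = 0" "A (y, r x) = 0" using inv by blast
    have "act p r A (x, p y) = 0 \<and> act p r A (p y, x) = 0"
      by (simp add: act_apply rp y p0)
    then show "\<exists>y. act p r A (x, y) = 0 \<and> act p r A (y, x) = 0" by (rule exI)
  qed
  ultimately show ?thesis unfolding GroupTables_def is_group_table_def by simp
qed

lemma act_inv: "perm p r \<Longrightarrow> act r p (act p r A) = A"
  unfolding perm_def act_def by (simp add: fun_eq_iff)

lemma cont_act: "continuous_map table_space table_space (act p r)"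
  unfolding table_space_def continuous_map_componentwise_UNIV
proof
  fix k :: "nat \<times> nat"
  have 1: "continuous_map (product_topology (\<lambda>_. discrete_topology (UNIV::nat set)) UNIV)
             (discrete_topology UNIV) (\<lambda>A. A (r (fst k), r (snd k)))"
    by (rule continuous_map_product_projection) simp
  have 2: "continuous_map (discrete_topology (UNIV::nat set)) (discrete_topology (UNIV::nat set)) p"
    by simp
  have "continuous_map (product_topology (\<lambda>_. discrete_topology (UNIV::nat set)) UNIV)
             (discrete_topology UNIV) (p \<circ> (\<lambda>A. A (r (fst k), r (snd k))))"
    by (rule continuous_map_compose[OF 1 2])
  then show "continuous_map (product_topology (\<lambda>_. discrete_topology (UNIV::nat set)) UNIV)
             (discrete_topology UNIV) (\<lambda>A. act p r A k)"
    by (simp add: act_def o_def)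
qed

lemma cont_act_group: "perm p r \<Longrightarrow> continuous_map group_space group_space (act p r)"
proof -
  assume P: "perm p r"
  have "continuous_map group_space table_space (act p r)"
    unfolding group_space_def by (rule continuous_map_from_subtopology[OF cont_act])
  moreover have "act p r \<in> topspace group_space \<rightarrow> GroupTables"
    using act_GT[OF P] by auto
  ultimately show ?thesis
    unfolding group_space_def continuous_map_in_subtopology
    by (simp add: group_space_def[symmetric])
qed

lemma homeo_act: "perm p r \<Longrightarrow> homeomorphic_map group_space group_space (act p r)"
proof -
  assume P: "perm p r"
  have "homeomorphic_maps group_space group_space (act p r) (act r p)"
    unfolding homeomorphic_maps_def
    using cont_act_group[OF P] cont_act_group[OF perm_sym[OF P]] act_inv[OF P] act_inv[OF perm_sym[OF P]]
    by simp
  then show ?thesis by (rule homeomorphic_maps_imp_map)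
qed

lemma term_act: "perm p r \<Longrightarrow> term_eval (act p r A) (p \<circ> e) t = p (term_eval A e t)"
  by (induction t) (auto simp: act_apply perm_def)

lemma models_act: "perm p r \<Longrightarrow> models (act p r A) \<phi> (p \<circ> e) = models A \<phi> e"
proof (induction \<phi> arbitrary: e)
  case (GEq s t)
  have inj: "\<And>a b. p a = p b \<longleftrightarrow> a = b" using GEq(1) unfolding perm_def by metis
  have "models (act p r A) (GEq s t) (p \<circ> e) = (p (term_eval A e s) = p (term_eval A e t))"
    by (simp only: models.simps term_act[OF GEq(1)])
  then show ?case using inj by (simp add: comp_def)
next
  case (GEx i q)
  have pr: "\<And>x. p (r x) = x" and rp: "\<And>x. r (p x) = x" using GEx(2) unfolding perm_def by auto
  have eq: "\<And>a. (p \<circ> e)(i := a) = p \<circ> (e(i := r a))" by (simp add: fun_eq_iff pr)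
  have each: "models (act p r A) q ((p \<circ> e)(i := a)) = models A q (e(i := r a))" for a
    unfolding eq by (rule GEx(1)[OF GEx(2)])
  have "models (act p r A) (GEx i q) (p \<circ> e) = (\<exists>a. models A q (e(i := r a)))"
    by (simp only: models.simps each)
  also have "\<dots> = (\<exists>a. models A q (e(i := a)))" by (metis rp)
  finally show ?case by (simp only: models.simps)
next
  case (GAll i q)
  have pr: "\<And>x. p (r x) = x" and rp: "\<And>x. r (p x) = x" using GAll(2) unfolding perm_def by auto
  have eq: "\<And>a. (p \<circ> e)(i := a) = p \<circ> (e(i := r a))" by (simp add: fun_eq_iff pr)
  have each: "models (act p r A) q ((p \<circ> e)(i := a)) = models A q (e(i := r a))" for a
    unfolding eq by (rule GAll(1)[OF GAll(2)])
  have "models (act p r A) (GAll i q) (p \<circ> e) = (\<forall>a. models A q (e(i := r a)))"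
    by (simp only: models.simps each)
  also have "\<dots> = (\<forall>a. models A q (e(i := a)))" by (metis rp)
  finally show ?case by (simp only: models.simps)
qed simp_all

lemma term_indep: "(\<forall>i\<in>term_vars t. e i = e' i) \<Longrightarrow> term_eval A e t = term_eval A e' t"
  by (induction t) auto

lemma models_indep: "(\<forall>i\<in>free_vars \<phi>. e i = e' i) \<Longrightarrow> models A \<phi> e = models A \<phi> e'"
proof (induction \<phi> arbitrary: e e')
  case (GEq s t)
  then show ?case using term_indep[of s e e' A] term_indep[of t e e' A] by simp
next
  case (GEx i q)
  have "\<And>a. models A q (e(i := a)) = models A q (e'(i := a))"
    by (rule GEx(1)) (use GEx(2) in auto)
  then show ?case by simp
next
  case (GAll i q)
  have "\<And>a. models A q (e(i := a)) = models A q (e'(i := a))"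
    by (rule GAll(1)) (use GAll(2) in auto)
  then show ?case by simp
next
  case (GNot q)
  have "models A q e = models A q e'" by (rule GNot(1)) (use GNot(2) in auto)
  then show ?case by simp
next
  case (GAnd q1 q2)
  have "models A q1 e = models A q1 e'" by (rule GAnd(1)) (use GAnd(3) in auto)
  moreover have "models A q2 e = models A q2 e'" by (rule GAnd(2)) (use GAnd(3) in auto)
  ultimately show ?case by simp
next
  case (GOr q1 q2)
  have "models A q1 e = models A q1 e'" by (rule GOr(1)) (use GOr(3) in auto)
  moreover have "models A q2 e = models A q2 e'" by (rule GOr(2)) (use GOr(3) in auto)
  ultimately show ?case by simp
next
  case (GImp q1 q2)
  have "models A q1 e = models A q1 e'" by (rule GImp(1)) (use GImp(3) in auto)
  moreover have "models A q2 e = models A q2 e'" by (rule GImp(2)) (use GImp(3) in auto)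
  ultimately show ?case by simp
qed auto

lemma sentence_act:
  assumes "sentence \<phi>" "perm p r"
  shows "models (act p r A) \<phi> e = models A \<phi> e"
proof -
  have "models (act p r A) \<phi> e = models (act p r A) \<phi> (p \<circ> e)"
    by (rule models_indep) (use assms(1) in \<open>simp add: sentence_def\<close>)
  also have "\<dots> = models A \<phi> e" by (rule models_act[OF assms(2)])
  finally show ?thesis .
qed


lemma extend_bij:
  fixes h :: "nat \<Rightarrow> nat" and K :: "nat set"
  assumes fin: "finite K" and inj: "inj_on h K"
  shows "\<exists>g. bij g \<and> (\<forall>k\<in>K. g k = h k)"
proof -
  define L where "L = h ` K"
  have finL: "finite L" using fin by (simp add: L_def)
  have "infinite (UNIV - K)" by (rule Diff_infinite_finite[OF fin]) simp
  then have iK: "infinite (- K)" by (simp add: Compl_eq_Diff_UNIV)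
  have "infinite (UNIV - L)" by (rule Diff_infinite_finite[OF finL]) simp
  then have iL: "infinite (- L)" by (simp add: Compl_eq_Diff_UNIV)
  define e1 where "e1 = enumerate (- K)"
  define e2 where "e2 = enumerate (- L)"
  have b1: "bij_betw e1 UNIV (- K)" unfolding e1_def by (rule bij_enumerate[OF iK])
  have b2: "bij_betw e2 UNIV (- L)" unfolding e2_def by (rule bij_enumerate[OF iL])
  have bk: "bij_betw (e2 \<circ> inv_into UNIV e1) (- K) (- L)"
    by (rule bij_betw_trans[OF bij_betw_inv_into[OF b1] b2])
  define g where "g x = (if x \<in> K then h x else (e2 \<circ> inv_into UNIV e1) x)" for x
  have "bij_betw h K L" unfolding L_def by (rule inj_on_imp_bij_betw[OF inj])
  then have g1: "bij_betw g K L"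
    by (subst bij_betw_cong[of K g h]) (simp_all add: g_def)
  have g2: "bij_betw g (- K) (- L)"
    using bk by (subst bij_betw_cong[of "- K" g "e2 \<circ> inv_into UNIV e1"]) (simp_all add: g_def)
  have "bij_betw g (K \<union> - K) (L \<union> - L)"
    by (rule bij_betw_combine[OF g1 g2]) simp
  then have "bij g" by simp
  moreover have "\<forall>k\<in>K. g k = h k" by (simp add: g_def)
  ultimately show ?thesis by blast
qed

definition ptab :: "(nat \<times> nat \<Rightarrow> nat) \<Rightarrow> (nat \<times> nat \<Rightarrow> nat) \<Rightarrow> (nat \<times> nat \<Rightarrow> nat)" where
  "ptab A1 A2 = (\<lambda>q. prod_encode (A1 (fst (prod_decode (fst q)), fst (prod_decode (snd q))),
                                  A2 (snd (prod_decode (fst q)), snd (prod_decode (snd q)))))"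

lemma prod_encode_00: "prod_encode (0, 0) = 0"
  by (simp add: prod_encode_def)

lemma prod_decode_0: "prod_decode 0 = (0, 0)"
  by (metis prod_encode_00 prod_encode_inverse)

lemma GT_facts:
  assumes "A \<in> GroupTables"
  shows "\<And>x y z. A (A (x, y), z) = A (x, A (y, z))" "\<And>x. A (0, x) = x" "\<And>x. A (x, 0) = x"
    "\<And>x. \<exists>y. A (x, y) = 0 \<and> A (y, x) = 0"
  using assms unfolding GroupTables_def is_group_table_def by auto

lemma ptab_GT:
  assumes A1: "A1 \<in> GroupTables" and A2: "A2 \<in> GroupTables"
  shows "ptab A1 A2 \<in> GroupTables"
proof -
  note f1 = GT_facts[OF A1] and f2 = GT_facts[OF A2]
  have "\<forall>x y z. ptab A1 A2 (ptab A1 A2 (x, y), z) = ptab A1 A2 (x, ptab A1 A2 (y, z))"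
    by (simp add: ptab_def f1(1) f2(1))
  moreover have "\<forall>x. ptab A1 A2 (0, x) = x \<and> ptab A1 A2 (x, 0) = x"
    by (simp add: ptab_def prod_decode_0 f1(2,3) f2(2,3))
  moreover have "\<forall>x. \<exists>y. ptab A1 A2 (x, y) = 0 \<and> ptab A1 A2 (y, x) = 0"
  proof
    fix x
    obtain a b where ab: "prod_decode x = (a, b)" by (cases "prod_decode x")
    obtain a' where a': "A1 (a, a') = 0" "A1 (a', a) = 0" using f1(4) by blast
    obtain b' where b': "A2 (b, b') = 0" "A2 (b', b) = 0" using f2(4) by blast
    have "ptab A1 A2 (x, prod_encode (a', b')) = 0 \<and> ptab A1 A2 (prod_encode (a', b'), x) = 0"
      by (simp add: ptab_def ab a' b' prod_encode_00)
    then show "\<exists>y. ptab A1 A2 (x, y) = 0 \<and> ptab A1 A2 (y, x) = 0" by (rule exI)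
  qed
  ultimately show ?thesis unfolding GroupTables_def is_group_table_def by simp
qed

lemma ptab_i1: "A2 \<in> GroupTables \<Longrightarrow>
   ptab A1 A2 (prod_encode (a, 0), prod_encode (c, 0)) = prod_encode (A1 (a, c), 0)"
  using GT_facts(2)[of A2 0] by (simp add: ptab_def)

lemma ptab_i2: "A1 \<in> GroupTables \<Longrightarrow>
   ptab A1 A2 (prod_encode (0, b), prod_encode (0, d)) = prod_encode (0, A2 (b, d))"
  using GT_facts(2)[of A1 0] by (simp add: ptab_def)

lemma bij_facts:
  assumes "bij (g :: nat \<Rightarrow> nat)"
  shows "\<And>x. inv g (g x) = x" "\<And>x. g (inv g x) = x"
  using assms by (auto simp: bij_is_inj bij_is_surj surj_f_inv_f)

lemma transit:
  assumes A1: "A1 \<in> GroupTables" and A2: "A2 \<in> GroupTables"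
    and F1: "finite F1" and F2: "finite F2"
  shows "\<exists>p r B. perm p r \<and> B \<in> GroupTables \<and> B \<in> cyl F2 A2 \<and> act p r B \<in> cyl F1 A1"
proof -
  define K1 where "K1 = {0} \<union> fst ` F1 \<union> snd ` F1 \<union> A1 ` F1"
  define K2 where "K2 = {0} \<union> fst ` F2 \<union> snd ` F2 \<union> A2 ` F2"
  have fK1: "finite K1" unfolding K1_def using F1 by simp
  have fK2: "finite K2" unfolding K2_def using F2 by simp
  have inj1: "inj_on (\<lambda>a. prod_encode (a, 0)) K1" by (auto simp: inj_on_def)
  have inj2: "inj_on (\<lambda>b. prod_encode (0, b)) K2" by (auto simp: inj_on_def)
  obtain g1 where g1: "bij g1" "\<forall>k\<in>K1. g1 k = prod_encode (k, 0)"
    using extend_bij[OF fK1 inj1] by blast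
  obtain g2 where g2: "bij g2" "\<forall>k\<in>K2. g2 k = prod_encode (0, k)"
    using extend_bij[OF fK2 inj2] by blast
  note i1 = bij_facts[OF g1(1)] and i2 = bij_facts[OF g2(1)]
  have g10: "g1 0 = 0" using g1(2) prod_encode_00 unfolding K1_def by simp
  have g20: "g2 0 = 0" using g2(2) prod_encode_00 unfolding K2_def by simp
  have ig10: "inv g1 0 = 0" using i1(1)[of 0] g10 by simp
  have ig20: "inv g2 0 = 0" using i2(1)[of 0] g20 by simp
  define P where "P = ptab A1 A2"
  have PGT: "P \<in> GroupTables" unfolding P_def by (rule ptab_GT[OF A1 A2])
  have ps: "perm (inv g2) g2" unfolding perm_def using i2 ig20 by simp
  define B where "B = act (inv g2) g2 P"
  have BGT: "B \<in> GroupTables" unfolding B_def by (rule act_GT[OF ps PGT])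
  have Bcyl: "B \<in> cyl F2 A2"
    unfolding cyl_def
  proof (intro CollectI ballI)
    fix q assume q: "q \<in> F2"
    obtain b d where bd: "q = (b, d)" by (cases q)
    have bK: "b \<in> K2" "d \<in> K2" "A2 (b, d) \<in> K2" using q unfolding bd K2_def by force+
    have "B (b, d) = inv g2 (P (g2 b, g2 d))" unfolding B_def by (simp add: act_apply)
    also have "\<dots> = inv g2 (P (prod_encode (0, b), prod_encode (0, d)))" using g2(2) bK by simp
    also have "\<dots> = inv g2 (prod_encode (0, A2 (b, d)))" unfolding P_def by (simp add: ptab_i2[OF A1])
    also have "\<dots> = inv g2 (g2 (A2 (b, d)))" using g2(2) bK by simp
    also have "\<dots> = A2 (b, d)" by (rule i2(1))
    finally show "B q = A2 q" unfolding bd .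
  qed
  define p where "p = inv g1 \<circ> g2"
  define r where "r = inv g2 \<circ> g1"
  have pr: "perm p r" unfolding perm_def p_def r_def using i1 i2 g20 ig10 by simp
  have Acyl: "act p r B \<in> cyl F1 A1"
    unfolding cyl_def
  proof (intro CollectI ballI)
    fix q assume q: "q \<in> F1"
    obtain a c where ac: "q = (a, c)" by (cases q)
    have aK: "a \<in> K1" "c \<in> K1" "A1 (a, c) \<in> K1" using q unfolding ac K1_def by force+
    have "act p r B (a, c) = p (inv g2 (P (g2 (r a), g2 (r c))))" unfolding B_def by (simp add: act_apply)
    also have "\<dots> = p (inv g2 (P (g1 a, g1 c)))" unfolding r_def by (simp add: i2(2))
    also have "\<dots> = p (inv g2 (P (prod_encode (a, 0), prod_encode (c, 0))))" using g1(2) aK by simp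
    also have "\<dots> = p (inv g2 (prod_encode (A1 (a, c), 0)))" unfolding P_def by (simp add: ptab_i1[OF A2])
    also have "\<dots> = p (inv g2 (g1 (A1 (a, c))))" using g1(2) aK by simp
    also have "\<dots> = A1 (a, c)" unfolding p_def by (simp add: i1 i2)
    finally show "act p r B q = A1 q" unfolding ac .
  qed
  show ?thesis using pr BGT Bcyl Acyl by blast
qed

lemma nbhd:
  assumes U: "openin group_space U" and A: "A \<in> U"
  shows "\<exists>F. finite F \<and> cyl F A \<inter> GroupTables \<subseteq> U"
proof -
  obtain V where V: "openin table_space V" "U = V \<inter> GroupTables"
    using U unfolding group_space_def openin_subtopology by blast
  have AV: "A \<in> V" using A V(2) by blast
  obtain X :: "nat \<times> nat \<Rightarrow> nat set" where X: "A \<in> (\<Pi>\<^sub>E i\<in>UNIV. X i)"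
    "\<forall>i. openin (discrete_topology UNIV) (X i)"
    "finite {i. X i \<noteq> topspace (discrete_topology (UNIV::nat set))}" "(\<Pi>\<^sub>E i\<in>UNIV. X i) \<subseteq> V"
    using product_topology_open_contains_basis[OF V(1)[unfolded table_space_def] AV] by blast
  define F where "F = {i. X i \<noteq> UNIV}"
  have fF: "finite F" using X(3) unfolding F_def by simp
  have "cyl F A \<subseteq> (\<Pi>\<^sub>E i\<in>UNIV. X i)"
  proof
    fix B assume B: "B \<in> cyl F A"
    have "\<forall>i. B i \<in> X i"
    proof
      fix i
      show "B i \<in> X i"
      proof (cases "X i = UNIV")
        case True then show ?thesis by simp
      next
        case False
        then have iF: "i \<in> F" by (simp add: F_def)
        have "B i = A i" using B iF unfolding cyl_def by blast
        moreover have "A i \<in> X i" by (rule PiE_mem[OF X(1) UNIV_I])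
        ultimately show ?thesis by simp
      qed
    qed
    then show "B \<in> (\<Pi>\<^sub>E i\<in>UNIV. X i)" by (simp add: PiE_iff)
  qed
  then have "cyl F A \<inter> GroupTables \<subseteq> U" using X(4) V(2) by blast
  then show ?thesis using fF by blast
qed

lemma meager_boundary: "openin X U \<Longrightarrow> meager_in X (X closure_of U - U)"
  unfolding meager_in_def
  using nowhere_dense_boundary[of X U] closure_of_subset_topspace[of X U]
  by (intro conjI exI[of _ "\<lambda>_. X closure_of U - U"]) auto


theorem theorem5p8:
  fixes \<phi> :: gform and e :: "nat \<Rightarrow> nat"
  shows "Sat_set \<phi> e \<in> borel_sets_of group_space \<and>
         (sentence \<phi> \<longrightarrow>
            meager_in group_space (Sat_set \<phi> e) \<or> comeager_in group_space (Sat_set \<phi> e))"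
proof (intro conjI impI)
  show "Sat_set \<phi> e \<in> borel_sets_of group_space" by (rule Sat_borel)
  assume sent: "sentence \<phi>"
  define S where "S = Sat_set \<phi> e"
  have Ssub: "S \<subseteq> GroupTables" unfolding S_def Sat_set_def by blast
  have Smem: "\<And>x. x \<in> S \<longleftrightarrow> x \<in> GroupTables \<and> models x \<phi> e" unfolding S_def Sat_set_def by blast
  obtain U :: "(nat \<times> nat \<Rightarrow> nat) set" where U: "openin group_space U" "meager_in group_space (S - U)"
    "meager_in group_space (U - S)"
    using bp_borel[OF Sat_borel[of \<phi> e]] unfolding S_def by blast
  have UGT: "U \<subseteq> GroupTables" using openin_subset[OF U(1)] by simp
  have Ucl: "U \<subseteq> group_space closure_of U" using closure_of_subset[OF openin_subset[OF U(1)]] .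
  show "meager_in group_space (Sat_set \<phi> e) \<or> comeager_in group_space (Sat_set \<phi> e)"
  proof (cases "U = {}")
    case True
    then have "meager_in group_space S" using U(2) by simp
    then show ?thesis unfolding S_def by blast
  next
    case False
    then obtain A0 where A0: "A0 \<in> U" by blast
    define W where "W = GroupTables - group_space closure_of U"
    have oW: "openin group_space W"
      unfolding W_def using openin_diff[OF openin_topspace closedin_closure_of, of group_space U] by simp
    have W0: "W = {}"
    proof (rule ccontr)
      assume "W \<noteq> {}"
      then obtain B0 where B0: "B0 \<in> W" by blast
      obtain F1 where F1: "finite F1" "cyl F1 A0 \<inter> GroupTables \<subseteq> U" using nbhd[OF U(1) A0] by blast
      obtain F2 where F2: "finite F2" "cyl F2 B0 \<inter> GroupTables \<subseteq> W" using nbhd[OF oW B0] by blast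
      have A0G: "A0 \<in> GroupTables" using A0 UGT by blast
      have B0G: "B0 \<in> GroupTables" using B0 unfolding W_def by blast
      obtain p r B where pr: "perm p r" and BG: "B \<in> GroupTables" and Bc: "B \<in> cyl F2 B0"
        and Ac: "act p r B \<in> cyl F1 A0"
        using transit[OF A0G B0G F1(1) F2(1)] by blast
      have BW: "B \<in> W" using F2(2) Bc BG by blast
      have aU: "act p r B \<in> U" using F1(2) Ac act_GT[OF pr BG] by blast
      define V where "V = W \<inter> {x \<in> topspace group_space. act p r x \<in> U}"
      have oV: "openin group_space V"
        unfolding V_def
        by (rule openin_Int[OF oW openin_continuous_map_preimage[OF cont_act_group[OF pr] U(1)]])
      have BV: "B \<in> V" unfolding V_def using BW BG aU by simp
      have "V \<subseteq> (S - U) \<union> act r p ` (U - S)"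
      proof
        fix x assume x: "x \<in> V"
        then have xG: "x \<in> GroupTables" and xW: "x \<in> W" and xU: "act p r x \<in> U"
          unfolding V_def by auto
        show "x \<in> (S - U) \<union> act r p ` (U - S)"
        proof (cases "x \<in> S")
          case True
          have "x \<notin> U" using xW Ucl unfolding W_def by blast
          then show ?thesis using True by blast
        next
          case False
          then have nm: "\<not> models x \<phi> e" using Smem xG by blast
          have "models (act p r x) \<phi> e = models x \<phi> e" by (rule sentence_act[OF sent pr])
          then have "act p r x \<notin> S" using nm Smem by blast
          then have "act p r x \<in> U - S" using xU by blast
          moreover have "x = act r p (act p r x)" using act_inv[OF pr] by simp
          ultimately show ?thesis by blast
        qed
      qed
      moreover have "meager_in group_space ((S - U) \<union> act r p ` (U - S))"
        by (rule meager_Un[OF U(2) meager_homeo[OF homeo_act[OF perm_sym[OF pr]] U(3)]])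
      ultimately have "meager_in group_space V" using meager_subset by blast
      then have "V = {}" using baire[OF oV] by blast
      then show False using BV by blast
    qed
    have "GroupTables - S \<subseteq> (U - S) \<union> (group_space closure_of U - U)"
      using W0 unfolding W_def by blast
    moreover have "meager_in group_space ((U - S) \<union> (group_space closure_of U - U))"
      by (rule meager_Un[OF U(3) meager_boundary[OF U(1)]])
    ultimately have "meager_in group_space (topspace group_space - S)"
      using meager_subset by simp
    then have "comeager_in group_space S" unfolding comeager_in_def using Ssub by simp
    then show ?thesis unfolding S_def by blast
  qed
qed

end
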